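(* Let $a>0$, $b>0$, $c>0$ and suppose that $$\Phi(x)={}_1F_2\left(a\,;b,c\,;-\frac{x^2}{4}\right)\ge 0\quad\text{for all } x\in\mathbb{R}.$$ Then for any $\gamma,\delta,\epsilon$ with $0\le\gamma<a$, $\delta\ge0$, $\epsilon\ge0$, not all three equal to zero, we have $(a-\gamma,\,b+\delta,\,c+\epsilon)\in\mathcal{P}_{1,2}$.
   Context: For $a,b,c>0$, ${}_1F_2\left(a\,;b,c\,;-\frac{x^2}{4}\right)=\sum_{k=0}^\infty \frac{(a)_k}{k!\,(b)_k(c)_k}\left(-\frac{x^2}{4}\right)^k$, where $(\alpha)_k=\Gamma(\alpha+k)/\Gamma(\alpha)$. $\mathcal{P}_{1,2}$ denotes the set of all triples $(a,b,c)$ of positive reals such that ${}_1F_2\left(a\,;b,c\,;-\frac{x^2}{4}\right)>0$ for all $x>0$. *)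

theory Defs
  imports "HOL-Analysis.Analysis"
begin

definition hyp1F2 :: "real \<Rightarrow> real \<Rightarrow> real \<Rightarrow> real \<Rightarrow> real" where
  "hyp1F2 a b c z = (\<Sum>k. pochhammer a k / (fact k * pochhammer b k * pochhammer c k) * z ^ k)"

definition P12 :: "(real \<times> real \<times> real) set" where
  "P12 = {(a, b, c). a > 0 \<and> b > 0 \<and> c > 0 \<and>
           (\<forall>x::real. x > 0 \<longrightarrow> hyp1F2 a b c (- (x^2) / 4) > 0)}"

end

theory Submission
  imports Defs
begin

lemma beta_integral_k:
  fixes p q :: real and k :: nat
  assumes "p > 0" "q > 0"
  shows "((\<lambda>t. t ^ k * (t powr (p - 1) * (1 - t) powr (q - 1))) has_integral Beta (p + real k) q) {0..1}"
proof -
  have "((\<lambda>t. t powr (p + real k - 1) * (1 - t) powr (q - 1)) has_integral Beta (p + real k) q) {0..1}"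
    using has_integral_Beta_real[of "p + real k" q] assms by simp
  moreover have "t ^ k * (t powr (p - 1) * (1 - t) powr (q - 1)) = t powr (p + real k - 1) * (1 - t) powr (q - 1)"
    if "t \<in> {0..1}" for t
  proof (cases "t = 0")
    case True then show ?thesis by (cases k) auto
  next
    case False
    with that have "t > 0" by auto
    then have "t ^ k * t powr (p - 1) = t powr (p + real k - 1)"
      by (simp add: powr_realpow[symmetric] powr_add[symmetric] algebra_simps)
    then show ?thesis by (simp add: mult.assoc[symmetric])
  qed
  ultimately show ?thesis
    by (subst has_integral_cong) auto
qed

lemma beta_poch:
  fixes p q :: real
  assumes "p > 0" "q > 0"
  shows "Beta (p + real k) q = Beta p q * pochhammer p k / pochhammer (p + q) k"
proof -
  have np: "p \<notin> \<int>\<^sub>\<le>\<^sub>0" "p + q \<notin> \<int>\<^sub>\<le>\<^sub>0" using assms by (auto elim!: nonpos_Ints_cases)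
  have "Gamma (p + q) > 0" "Gamma p > 0" "Gamma (p+q+real k) > 0" using assms by auto
  then show ?thesis
    unfolding Beta_def pochhammer_Gamma[OF np(1)] pochhammer_Gamma[OF np(2)]
    by (simp add: field_simps)
qed

lemma transfer:
  fixes cf :: "nat \<Rightarrow> real" and p q z :: real
  assumes p: "p > 0" and q: "q > 0"
    and abss: "\<And>r. summable (\<lambda>k. \<bar>cf k\<bar> * r ^ k)"
    and nn: "\<And>t. t \<in> {0..1} \<Longrightarrow> (\<Sum>k. cf k * (z*t)^k) \<ge> 0"
    and c0: "cf 0 > 0"
  shows "(\<Sum>k. cf k * z^k * Beta (p + real k) q) > 0"
proof -
  define w where "w t = t powr (p - 1) * (1 - t) powr (q - 1)" for t :: real
  define F where "F = (\<lambda>x::real. \<Sum>k. cf k * x^k)"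
  define M where "M = (\<Sum>k. \<bar>cf k\<bar> * \<bar>z\<bar>^k)"
  have summ: "summable (\<lambda>k. cf k * x^k)" for x
    by (rule summable_rabs_cancel) (use abss[of "\<bar>x\<bar>"] in \<open>simp add: abs_mult power_abs\<close>)
  have w0: "t \<in> {0..1} \<Longrightarrow> w t \<ge> 0" for t by (simp add: w_def)
  define f where "f n t = (\<Sum>k<n. (cf k * z^k) * (t^k * w t))" for n t
  have fint: "(f n has_integral (\<Sum>k<n. cf k * z^k * Beta (p + real k) q)) {0..1}" for n
    unfolding f_def
    by (rule has_integral_sum) (auto intro!: has_integral_mult_right beta_integral_k p q simp: w_def)
  have "((\<lambda>t. M * (t^0 * w t)) has_integral (M * Beta (p + real 0) q)) {0..1}"
    by (rule has_integral_mult_right) (unfold w_def, rule beta_integral_k[OF p q])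
  then have hint: "(\<lambda>t. M * w t) integrable_on {0..1}"
    by (auto simp: integrable_on_def)
  have le: "norm (f n t) \<le> M * w t" if t: "t \<in> {0..1}" for n t
  proof -
    have "f n t = w t * (\<Sum>k<n. cf k * z^k * t^k)"
      by (simp add: f_def sum_distrib_left algebra_simps)
    moreover have "\<bar>\<Sum>k<n. cf k * z^k * t^k\<bar> \<le> M"
    proof -
      have "\<bar>\<Sum>k<n. cf k * z^k * t^k\<bar> \<le> (\<Sum>k<n. \<bar>cf k * z^k * t^k\<bar>)"
        by (rule sum_abs)
      also have "\<dots> \<le> (\<Sum>k<n. \<bar>cf k\<bar> * \<bar>z\<bar>^k)"
      proof (rule sum_mono)
        fix k
        have "\<bar>t\<bar>^k \<le> 1" using t by (simp add: power_le_one)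
        then show "\<bar>cf k * z^k * t^k\<bar> \<le> \<bar>cf k\<bar> * \<bar>z\<bar>^k"
          by (simp add: abs_mult power_abs mult_left_le)
      qed
      also have "\<dots> \<le> M" unfolding M_def
        by (rule sum_le_suminf) (use abss in auto)
      finally show ?thesis .
    qed
    ultimately show ?thesis using w0[OF t]
      by (simp add: abs_mult mult.commute[of "w t"] mult_right_mono)
  qed
  define g where "g t = w t * F (z*t)" for t
  have conv: "(\<lambda>n. f n t) \<longlonglongrightarrow> g t" for t
  proof -
    have "(\<lambda>n. f n t) = (\<lambda>n. w t * (\<Sum>k<n. cf k * (z*t)^k))"
      by (simp add: f_def sum_distrib_left algebra_simps power_mult_distrib)
    then show ?thesis unfolding g_def F_def
      by (simp add: tendsto_mult_left summable_LIMSEQ summ)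
  qed
  have fi: "f n integrable_on {0..1}" for n using fint by (auto simp: integrable_on_def)
  note DC = dominated_convergence[of f "{0..1}" "\<lambda>t. M * w t" g, OF fi hint le conv]
  have "(\<lambda>n. \<Sum>k<n. cf k * z^k * Beta (p + real k) q) \<longlonglongrightarrow> integral {0..1} g"
  proof -
    have "(\<lambda>n. integral {0..1} (f n)) = (\<lambda>n. \<Sum>k<n. cf k * z^k * Beta (p + real k) q)"
      using fint by (intro ext integral_unique)
    then show ?thesis using DC(2) by simp
  qed
  then have sumeq: "(\<Sum>k. cf k * z^k * Beta (p + real k) q) = integral {0..1} g"
    by (simp add: sums_def sums_unique[symmetric])
  have g0: "t \<in> {0..1} \<Longrightarrow> g t \<ge> 0" for t
    using nn w0 by (simp add: g_def F_def)
  have contF: "isCont F x" for x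
    unfolding F_def by (rule isCont_powser[of _ "\<bar>x\<bar> + 1"]) (use summ in auto)
  have F0: "F 0 = cf 0" unfolding F_def by simp
  obtain d where d: "d > 0" "\<And>x'. dist x' 0 < d \<Longrightarrow> dist (F x') (F 0) < cf 0"
    using contF[of 0] c0 unfolding continuous_at_eps_delta by blast
  define s where "s = min (1/2) (d / (2 * (\<bar>z\<bar> + 1)))"
  have s: "s > 0" "s \<le> 1/2" using d unfolding s_def by (auto simp: min_def)
  have "\<bar>z\<bar> * s \<le> (\<bar>z\<bar> + 1) * (d / (2 * (\<bar>z\<bar> + 1)))"
    by (rule mult_mono) (use d in \<open>auto simp: s_def\<close>)
  also have "\<dots> < d" using d by (simp add: field_simps add_pos_nonneg)
  finally have "dist (z * s) 0 < d" using s by (simp add: abs_mult)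
  then have "dist (F (z * s)) (F 0) < cf 0" by (rule d(2))
  then have Fs: "F (z * s) > 0" using F0 by (simp add: dist_real_def)
  have ws: "w s > 0" using s by (simp add: w_def)
  have gs: "g s > 0" using Fs ws by (simp add: g_def)
  have contg: "continuous_on {s/2..s} g"
    unfolding g_def w_def
    by (intro continuous_intros continuous_at_imp_continuous_on ballI isCont_o2[OF _ contF])
       (use s in auto)
  have gi: "g integrable_on {s/2..s}" by (rule integrable_continuous_interval[OF contg])
  have g0': "x \<in> {s/2..s} \<Longrightarrow> g x \<ge> 0" for x using g0 s by auto
  have "integral {s/2..s} g \<noteq> 0"
    using integral_eq_0_iff[of "s/2" s g, OF contg _ g0'] s gs by auto
  moreover have "integral {s/2..s} g \<ge> 0"
    by (rule integral_nonneg[OF gi]) (use g0' in auto)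
  moreover have "integral {s/2..s} g \<le> integral {0..1} g"
    by (rule integral_subset_le[OF _ gi DC(1)]) (use s g0 in auto)
  ultimately show ?thesis using sumeq by linarith
qed

definition co :: "real \<Rightarrow> real \<Rightarrow> real \<Rightarrow> nat \<Rightarrow> real" where
  "co a b c k = pochhammer a k / (fact k * pochhammer b k * pochhammer c k)"

lemma hyp_co: "hyp1F2 a b c z = (\<Sum>k. co a b c k * z^k)"
  unfolding hyp1F2_def co_def by simp

lemma co_pos: "a > 0 \<Longrightarrow> b > 0 \<Longrightarrow> c > 0 \<Longrightarrow> co a b c k > 0"
  unfolding co_def by (intro divide_pos_pos mult_pos_pos pochhammer_pos) auto

lemma ratio_aux:
  fixes a b c k r :: real
  assumes "a > 0" "b > 0" "c > 0" "k \<ge> 1" "k \<ge> a" "k \<ge> 4 * \<bar>r\<bar>"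
  shows "(a + k) * \<bar>r\<bar> \<le> 1/2 * ((k + 1) * (b + k) * (c + k))"
proof -
  have 1: "(a + k) * \<bar>r\<bar> \<le> (2 * k) * (k / 4)"
    by (rule mult_mono) (use assms in auto)
  have 2: "k * k \<le> (k + 1) * (b + k)"
    by (rule mult_mono) (use assms in auto)
  have 3: "(k + 1) * (b + k) * 1 \<le> (k + 1) * (b + k) * (c + k)"
    by (rule mult_left_mono) (use assms in auto)
  show ?thesis using 1 2 3 by simp
qed

lemma co_summ:
  assumes a: "a > 0" and b: "b > 0" and c: "c > 0"
  shows "summable (\<lambda>k. \<bar>co a b c k\<bar> * r ^ k)"
proof (rule summable_ratio_test[where c = "1/2" and N = "nat \<lceil>a + 4 * \<bar>r\<bar>\<rceil> + 1"])
  fix n :: nat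
  assume n: "n \<ge> nat \<lceil>a + 4 * \<bar>r\<bar>\<rceil> + 1"
  have kn: "real n \<ge> 1" "real n \<ge> a" "real n \<ge> 4 * \<bar>r\<bar>"
    using n a by linarith+
  have pb: "pochhammer b n > 0" "pochhammer c n > 0" using b c by (auto intro: pochhammer_pos)
  have cs: "co a b c (Suc n) = co a b c n * ((a + n) / ((real n + 1) * (b + n) * (c + n)))"
    unfolding co_def using pb by (simp add: pochhammer_Suc field_simps)
  have den: "(real n + 1) * (b + n) * (c + n) > 0" using b c by simp
  have "(a + n) * \<bar>r\<bar> / ((real n + 1) * (b + n) * (c + n)) \<le> 1/2"
    using ratio_aux[OF a b c kn] by (simp only: pos_divide_le_eq[OF den])
  then have "\<bar>co a b c n\<bar> * \<bar>r\<bar>^n * ((a + n) * \<bar>r\<bar> / ((real n + 1) * (b + n) * (c + n)))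
        \<le> \<bar>co a b c n\<bar> * \<bar>r\<bar>^n * (1/2)"
    by (rule mult_left_mono) simp
  moreover have "norm (\<bar>co a b c (Suc n)\<bar> * r ^ Suc n)
     = \<bar>co a b c n\<bar> * \<bar>r\<bar>^n * ((a + n) * \<bar>r\<bar> / ((real n + 1) * (b + n) * (c + n)))"
  proof -
    have rn: "(a + n) / ((real n + 1) * (b + n) * (c + n)) \<ge> 0" using a den by simp
    have ca: "\<bar>co a b c (Suc n)\<bar> = \<bar>co a b c n\<bar> * ((a + n) / ((real n + 1) * (b + n) * (c + n)))"
      unfolding cs using rn by (simp only: abs_mult abs_of_nonneg)
    have e: "\<bar>a + real n\<bar> = a + n" "\<bar>b + real n\<bar> = b + n" "\<bar>c + real n\<bar> = c + n" using a b c by auto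
    show ?thesis unfolding ca by (simp add: abs_mult power_abs e mult_ac)
  qed
  ultimately show "norm (\<bar>co a b c (Suc n)\<bar> * r ^ Suc n) \<le> 1/2 * norm (\<bar>co a b c n\<bar> * r ^ n)"
    by (simp add: abs_mult power_abs mult_ac)
qed simp

lemma step_gen:
  fixes cf cf' :: "nat \<Rightarrow> real" and p q z :: real
  assumes p: "p > 0" and q: "q > 0"
    and abss: "\<And>r. summable (\<lambda>k. \<bar>cf k\<bar> * r ^ k)"
    and abss': "\<And>r. summable (\<lambda>k. \<bar>cf' k\<bar> * r ^ k)"
    and nn: "\<And>t. t \<in> {0..1} \<Longrightarrow> (\<Sum>k. cf k * (z*t)^k) \<ge> 0"
    and c0: "cf 0 > 0"
    and rel: "\<And>k. cf k * Beta (p + real k) q = Beta p q * cf' k"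
  shows "(\<Sum>k. cf' k * z^k) > 0"
proof -
  have summ: "summable (\<lambda>k. cf' k * z^k)"
    by (rule summable_rabs_cancel) (use abss'[of "\<bar>z\<bar>"] in \<open>simp add: abs_mult power_abs\<close>)
  have B: "Beta p q > 0" using p q by (simp add: Beta_def)
  have "0 < (\<Sum>k. cf k * z^k * Beta (p + real k) q)"
    by (rule transfer[OF p q abss nn c0])
  also have "\<dots> = (\<Sum>k. Beta p q * (cf' k * z^k))"
  proof (rule suminf_cong)
    fix k
    have "cf k * z^k * Beta (p + real k) q = (cf k * Beta (p + real k) q) * z^k" by (simp add: mult_ac)
    also have "\<dots> = (Beta p q * cf' k) * z^k" by (simp only: rel)
    finally show "cf k * z^k * Beta (p + real k) q = Beta p q * (cf' k * z^k)" by (simp add: mult_ac)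
  qed
  also have "\<dots> = Beta p q * (\<Sum>k. cf' k * z^k)"
    by (rule suminf_mult[OF summ])
  finally show ?thesis using B by (simp add: zero_less_mult_iff)
qed

lemma nn_aux:
  assumes P: "\<forall>z\<le>0. hyp1F2 a b c z \<ge> 0" and z: "z \<le> 0"
  shows "\<And>t. t \<in> {0..1} \<Longrightarrow> (\<Sum>k. co a b c k * (z*t)^k) \<ge> 0"
proof -
  fix t :: real assume "t \<in> {0..1}"
  then have "z * t \<le> 0" using z by (simp add: mult_nonpos_nonneg)
  then show "(\<Sum>k. co a b c k * (z*t)^k) \<ge> 0" using P by (simp add: hyp_co)
qed

lemma step_a:
  assumes a: "a > 0" and b: "b > 0" and c: "c > 0" and g: "0 < g" "g < a"
    and P: "\<forall>z\<le>0. hyp1F2 a b c z \<ge> 0" and z: "z \<le> 0"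
  shows "hyp1F2 (a - g) b c z > 0"
  unfolding hyp_co
proof (rule step_gen[where p = "a - g" and q = g and cf = "co a b c"])
  show "co a b c k * Beta (a - g + real k) g = Beta (a - g) g * co (a - g) b c k" for k
  proof -
    have "pochhammer a k > 0" "pochhammer b k > 0" "pochhammer c k > 0" "(fact k :: real) > 0"
      using a b c by (auto intro: pochhammer_pos)
    then show ?thesis using beta_poch[of "a - g" g k] g
      by (simp add: co_def field_simps)
  qed
qed (use a b c g co_summ co_pos nn_aux[OF P z] in auto)

lemma step_b:
  assumes a: "a > 0" and b: "b > 0" and c: "c > 0" and g: "0 < g"
    and P: "\<forall>z\<le>0. hyp1F2 a b c z \<ge> 0" and z: "z \<le> 0"
  shows "hyp1F2 a (b + g) c z > 0"
  unfolding hyp_co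
proof (rule step_gen[where p = b and q = g and cf = "co a b c"])
  show "co a b c k * Beta (b + real k) g = Beta b g * co a (b + g) c k" for k
  proof -
    have "pochhammer a k > 0" "pochhammer b k > 0" "pochhammer c k > 0" "(fact k :: real) > 0"
      "pochhammer (b + g) k > 0"
      using a b c g by (auto intro: pochhammer_pos)
    then show ?thesis using beta_poch[of b g k] g b
      by (simp add: co_def field_simps)
  qed
qed (use a b c g co_summ co_pos nn_aux[OF P z] in auto)

lemma step_c:
  assumes a: "a > 0" and b: "b > 0" and c: "c > 0" and g: "0 < g"
    and P: "\<forall>z\<le>0. hyp1F2 a b c z \<ge> 0" and z: "z \<le> 0"
  shows "hyp1F2 a b (c + g) z > 0"
  unfolding hyp_co
proof (rule step_gen[where p = c and q = g and cf = "co a b c"])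
  show "co a b c k * Beta (c + real k) g = Beta c g * co a b (c + g) k" for k
  proof -
    have "pochhammer a k > 0" "pochhammer b k > 0" "pochhammer c k > 0" "(fact k :: real) > 0"
      "pochhammer (c + g) k > 0"
      using a b c g by (auto intro: pochhammer_pos)
    then show ?thesis using beta_poch[of c g k] g c
      by (simp add: co_def field_simps)
  qed
qed (use a b c g co_summ co_pos nn_aux[OF P z] in auto)

theorem lemma1:
  fixes a b c \<gamma> \<delta> \<epsilon> :: real
  assumes "a > 0" and "b > 0" and "c > 0"
    and "\<forall>x::real. hyp1F2 a b c (- (x^2) / 4) \<ge> 0"
    and "0 \<le> \<gamma>" and "\<gamma> < a" and "\<delta> \<ge> 0" and "\<epsilon> \<ge> 0"
    and "\<not> (\<gamma> = 0 \<and> \<delta> = 0 \<and> \<epsilon> = 0)"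
  shows "(a - \<gamma>, b + \<delta>, c + \<epsilon>) \<in> P12"
proof -
  have P: "\<forall>z\<le>0. hyp1F2 a b c z \<ge> 0"
  proof (intro allI impI)
    fix z :: real assume z: "z \<le> 0"
    have "- ((2 * sqrt (- z))^2) / 4 = z" using z by (simp add: power_mult_distrib)
    then show "hyp1F2 a b c z \<ge> 0" using assms(4)[rule_format, of "2 * sqrt (- z)"] by simp
  qed
  have Q: "\<forall>z\<le>0. hyp1F2 (a - \<gamma>) (b + \<delta>) (c + \<epsilon>) z > 0"
  proof (cases "\<gamma> > 0")
    case True
    have Q1: "\<forall>z\<le>0. hyp1F2 (a - \<gamma>) b c z > 0"
      using step_a[OF assms(1-3) True assms(6) P] by auto
    have Q2: "\<forall>z\<le>0. hyp1F2 (a - \<gamma>) (b + \<delta>) c z > 0"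
    proof (cases "\<delta> = 0")
      case False
      then show ?thesis using step_b[of "a - \<gamma>" b c \<delta>] Q1 assms by (auto simp: less_imp_le)
    qed (use Q1 in simp)
    show ?thesis
    proof (cases "\<epsilon> = 0")
      case False
      then show ?thesis using step_c[of "a - \<gamma>" "b + \<delta>" c \<epsilon>] Q2 assms by (auto simp: less_imp_le)
    qed (use Q2 in simp)
  next
    case False
    then have g0: "\<gamma> = 0" using assms by simp
    show ?thesis
    proof (cases "\<delta> > 0")
      case True
      have Q2: "\<forall>z\<le>0. hyp1F2 a (b + \<delta>) c z > 0"
        using step_b[OF assms(1-3) True P] by auto
      show ?thesis
      proof (cases "\<epsilon> = 0")
        case False
        then show ?thesis using step_c[of a "b + \<delta>" c \<epsilon>] Q2 assms g0 by (auto simp: less_imp_le)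
      qed (use Q2 g0 in simp)
    next
      case False
      then have d0: "\<delta> = 0" using assms by simp
      then have "\<epsilon> > 0" using assms g0 by simp
      then show ?thesis using step_c[OF assms(1-3) _ P] g0 d0 by auto
    qed
  qed
  have "hyp1F2 (a - \<gamma>) (b + \<delta>) (c + \<epsilon>) (- (x^2) / 4) > 0" for x
    using Q by simp
  then show ?thesis unfolding P12_def using assms by auto
qed

end
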